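(* There exists a connected symmetric configuration $v_3$ with strong chromatic number exactly 6 for $v=11$ and for every $v\geq 13$.
   Context: A symmetric configuration $v_3$ consists of a set of $v$ points and a collection of $v$ blocks, each block being a 3-element subset of the points, such that every point lies in exactly 3 blocks and any two distinct points lie in at most one common block; it is connected if it is not the union of two configurations on disjoint nonempty point sets. A strong colouring is an assignment of colours to points such that the three points of every block receive three distinct colours; the strong chromatic number is the minimum number of colours in a strong colouring. *)

theory Defs
  imports Main
begin

definition sym_config :: "'a set \<Rightarrow> 'a set set \<Rightarrow> bool" where
  "sym_config P B \<longleftrightarrow>
     finite P \<and> (\<forall>b\<in>B. b \<subseteq> P \<and> card b = 3) \<and> card B = card P \<and>
     (\<forall>p\<in>P. card {b\<in>B. p \<in> b} = 3) \<and>
     (\<forall>p\<in>P. \<forall>q\<in>P. p \<noteq> q \<longrightarrow> card {b\<in>B. p \<in> b \<and> q \<in> b} \<le> 1)"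

definition connected_config :: "'a set \<Rightarrow> 'a set set \<Rightarrow> bool" where
  "connected_config P B \<longleftrightarrow>
     \<not> (\<exists>P1 P2 B1 B2. P1 \<noteq> {} \<and> P2 \<noteq> {} \<and> P1 \<inter> P2 = {} \<and>
          P = P1 \<union> P2 \<and> B = B1 \<union> B2 \<and> sym_config P1 B1 \<and> sym_config P2 B2)"

definition strong_colouring :: "'a set set \<Rightarrow> ('a \<Rightarrow> nat) \<Rightarrow> bool" where
  "strong_colouring B c \<longleftrightarrow> (\<forall>b\<in>B. inj_on c b)"

definition strong_chromatic_number :: "'a set \<Rightarrow> 'a set set \<Rightarrow> nat" where
  "strong_chromatic_number P B = (LEAST k. \<exists>c. strong_colouring B c \<and> card (c ` P) = k)"

end

theory Submission
  imports Defs
begin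


lemma sym_from_blk:
  fixes blk :: "'i \<Rightarrow> 'a set"
  assumes fP: "finite P" and fI: "finite I" and cI: "card I = card P"
   and b3: "\<And>i. i\<in>I \<Longrightarrow> blk i \<subseteq> P \<and> card (blk i) = 3"
   and pr: "\<And>i j p q. i\<in>I \<Longrightarrow> j\<in>I \<Longrightarrow> p\<noteq>q \<Longrightarrow> p\<in>blk i \<Longrightarrow> q\<in>blk i \<Longrightarrow> p\<in>blk j \<Longrightarrow> q\<in>blk j \<Longrightarrow> i=j"
   and inc: "\<And>p. p\<in>P \<Longrightarrow> card {i\<in>I. p\<in>blk i} = 3"
  shows "sym_config P (blk ` I)"
proof -
  have inj: "inj_on blk I"
  proof (rule inj_onI)
    fix i j assume ij: "i\<in>I" "j\<in>I" "blk i = blk j"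
    have "card (blk i) = 3" using b3 ij(1) by blast
    then obtain x y z where xyz: "blk i = {x,y,z}" "x \<noteq> y" unfolding card_3_iff by blast
    have "x \<in> blk i" "y \<in> blk i" "x \<in> blk j" "y \<in> blk j" using xyz ij(3) by auto
    then show "i = j" using pr[OF ij(1,2) xyz(2)] by blast
  qed
  have c1: "card (blk ` I) = card P" using card_image[OF inj] cI by simp
  have c2: "card {b\<in>blk ` I. p \<in> b} = 3" if "p \<in> P" for p
  proof -
    have e: "{b\<in>blk ` I. p \<in> b} = blk ` {i\<in>I. p\<in>blk i}" by blast
    have "inj_on blk {i\<in>I. p\<in>blk i}" using inj by (rule inj_on_subset) blast
    then show ?thesis unfolding e using inc[OF that] by (simp add: card_image)
  qed
  have c3: "card {b\<in>blk ` I. p \<in> b \<and> q \<in> b} \<le> 1" if "p \<noteq> q" for p q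
  proof -
    have e: "{b\<in>blk ` I. p \<in> b \<and> q \<in> b} = blk ` {i\<in>I. p\<in>blk i \<and> q \<in> blk i}" by blast
    have fin: "finite {i\<in>I. p\<in>blk i \<and> q \<in> blk i}" using fI by simp
    have "\<forall>x\<in>{i\<in>I. p\<in>blk i \<and> q \<in> blk i}. \<forall>y\<in>{i\<in>I. p\<in>blk i \<and> q \<in> blk i}. x = y"
      using pr[of _ _ p q] that by blast
    then have "card {i\<in>I. p\<in>blk i \<and> q \<in> blk i} \<le> 1" by (simp add: card_le_Suc0_iff_eq[OF fin])
    moreover have "card (blk ` {i\<in>I. p\<in>blk i \<and> q \<in> blk i}) \<le> card {i\<in>I. p\<in>blk i \<and> q \<in> blk i}"
      by (rule card_image_le[OF fin])
    ultimately show ?thesis unfolding e by linarith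
  qed
  have s: "\<forall>b\<in>blk ` I. b \<subseteq> P \<and> card b = 3" using b3 by blast
  show ?thesis unfolding sym_config_def
    using fP s c1 c2 c3 by blast
qed

lemma conn_from:
  assumes sub: "\<And>i. i\<in>I \<Longrightarrow> blk i \<subseteq> P" and r: "r \<in> P"
   and cl: "\<And>S. (\<forall>i\<in>I. blk i \<inter> S \<noteq> {} \<longrightarrow> blk i \<subseteq> S) \<Longrightarrow> r \<in> S \<Longrightarrow> P \<subseteq> S"
  shows "connected_config P (blk ` I)"
  unfolding connected_config_def
proof (intro notI, elim exE conjE)
  fix P1 P2 B1 B2 assume h: "P1\<noteq>{}" "P2\<noteq>{}" "P1\<inter>P2={}" "P = P1\<union>P2" "blk ` I = B1\<union>B2"
    "sym_config P1 B1" "sym_config P2 B2"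
  have s1: "b \<subseteq> P1" if "b \<in> B1" for b using h(6) that unfolding sym_config_def by auto
  have s2: "b \<subseteq> P2" if "b \<in> B2" for b using h(7) that unfolding sym_config_def by auto
  have bb: "blk i \<in> B1 \<or> blk i \<in> B2" if "i \<in> I" for i using h(5) that by auto
  have cl1: "\<forall>i\<in>I. blk i \<inter> P1 \<noteq> {} \<longrightarrow> blk i \<subseteq> P1"
    using bb s1 s2 h(3) by blast
  have cl2: "\<forall>i\<in>I. blk i \<inter> P2 \<noteq> {} \<longrightarrow> blk i \<subseteq> P2"
    using bb s1 s2 h(3) by blast
  have "r \<in> P1 \<or> r \<in> P2" using r h(4) by auto
  then show False
  proof
    assume "r \<in> P1" then have "P \<subseteq> P1" using cl[OF cl1] by auto
    then show False using h by auto
  next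
    assume "r \<in> P2" then have "P \<subseteq> P2" using cl[OF cl2] by auto
    then show False using h by auto
  qed
qed

lemma chrom6:
  assumes "strong_colouring B c0" "card (c0 ` P) = 6"
    "\<And>c. strong_colouring B c \<Longrightarrow> 6 \<le> card (c ` P)"
  shows "strong_chromatic_number P B = 6"
  unfolding strong_chromatic_number_def
  by (rule Least_equality) (use assms in auto)

lemma clique_lb:
  assumes "K \<subseteq> P" "finite P" "card K = 6"
    "\<And>p q. p\<in>K \<Longrightarrow> q\<in>K \<Longrightarrow> p\<noteq>q \<Longrightarrow> \<exists>b\<in>B. p\<in>b \<and> q\<in>b"
    "strong_colouring B c"
  shows "6 \<le> card (c ` P)"
proof -
  have "inj_on c K"
  proof (rule inj_onI, rule ccontr)
    fix p q assume "p\<in>K" "q\<in>K" "c p = c q" "p \<noteq> q"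
    then obtain b where "b\<in>B" "p\<in>b" "q\<in>b" using assms(4) by blast
    then show False using assms(5) \<open>c p = c q\<close> \<open>p\<noteq>q\<close> unfolding strong_colouring_def inj_on_def by blast
  qed
  then have "card (c ` K) = 6" using assms(3) by (simp add: card_image)
  moreover have "card (c ` K) \<le> card (c ` P)" using assms(1,2) by (intro card_mono) auto
  ultimately show ?thesis by simp
qed

lemma fibre_bound:
  assumes fP: "finite P"
    and t: "\<And>p q r. p\<in>P \<Longrightarrow> q\<in>P \<Longrightarrow> r\<in>P \<Longrightarrow> p\<noteq>q \<Longrightarrow> p\<noteq>r \<Longrightarrow> q\<noteq>r \<Longrightarrow> c p \<noteq> c q \<or> c p \<noteq> c r \<or> c q \<noteq> c r"
  shows "card P \<le> 2 * card (c ` P)"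
proof -
  have fib: "card {p\<in>P. c p = y} \<le> 2" for y
  proof (rule ccontr)
    assume "\<not> ?thesis"
    then have "3 \<le> card {p\<in>P. c p = y}" by simp
    then obtain T where T: "T \<subseteq> {p\<in>P. c p = y}" "card T = 3" by (meson obtain_subset_with_card_n)
    then obtain x1 x2 x3 where "T = {x1,x2,x3}" "x1\<noteq>x2" "x2\<noteq>x3" "x1\<noteq>x3" by (auto simp: card_3_iff)
    then show False using T t[of x1 x2 x3] by auto
  qed
  have "P = (\<Union>y\<in>c ` P. {p\<in>P. c p = y})" by auto
  then have "card P \<le> (\<Sum>y\<in>c ` P. card {p\<in>P. c p = y})"
    by (metis card_UN_le fP finite_imageI)
  also have "\<dots> \<le> (\<Sum>y\<in>c ` P. 2)" by (rule sum_mono) (use fib in auto)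
  also have "\<dots> = 2 * card (c ` P)" by simp
  finally show ?thesis .
qed



definition blk :: "nat \<Rightarrow> nat \<Rightarrow> nat set" where
 "blk k i = (if i < k+4 then {i, i+1, i+3}
   else if i = k+4 then {k+4, k+5, 0}
   else if i = k+5 then {k+5, k+6, 1}
   else if i = k+6 then {k+7, k+8, k+9}
   else if i = k+7 then {k+7, k+10, k+11}
   else if i = k+8 then {k+8, k+10, k+12}
   else if i = k+9 then {k+9, k+11, k+12}
   else if i = k+10 then {k+7, k+12, k+6}
   else if i = k+11 then {k+8, k+11, 0}
   else {k+9, k+10, 2})"

lemma idx_cases: "(i::nat) < k+13 \<Longrightarrow> i < k+4 \<or> i = k+4 \<or> i = k+5 \<or> i = k+6 \<or> i = k+7 \<or> i = k+8 \<or> i = k+9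
  \<or> i = k+10 \<or> i = k+11 \<or> i = k+12" by linarith

lemma lin_lin: "(p::nat) \<noteq> q \<Longrightarrow> p \<in> {i,i+1,i+3} \<Longrightarrow> q \<in> {i,i+1,i+3} \<Longrightarrow> p \<in> {j,j+1,j+3} \<Longrightarrow> q \<in> {j,j+1,j+3} \<Longrightarrow> i = j"
  apply (simp only: insert_iff empty_iff simp_thms)
  apply (elim disjE)
  apply simp_all
  done

lemma lin_le: "(i::nat) < k+4 \<Longrightarrow> p \<in> {i,i+1,i+3} \<Longrightarrow> p \<le> k+6" by auto

lemma high1: "j < k+13 \<Longrightarrow> k+6 \<le> j \<Longrightarrow> p \<in> blk k j \<Longrightarrow> q \<in> blk k j \<Longrightarrow> p \<le> k+6 \<Longrightarrow> q \<le> k+6 \<Longrightarrow> p = q"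
proof -
  assume a: "j < k+13" "k+6 \<le> j" "p \<in> blk k j" "q \<in> blk k j" "p \<le> k+6" "q \<le> k+6"
  have "j = k+6 \<or> j = k+7 \<or> j = k+8 \<or> j = k+9 \<or> j = k+10 \<or> j = k+11 \<or> j = k+12" using a by arith
  then show ?thesis using a(3-6) by (elim disjE) (auto simp: blk_def)
qed

lemma lin_oth: "i < k+4 \<Longrightarrow> j < k+13 \<Longrightarrow> \<not> j < k+4 \<Longrightarrow> p \<noteq> q \<Longrightarrow> p \<in> {i,i+1,i+3} \<Longrightarrow> q \<in> {i,i+1,i+3}
  \<Longrightarrow> p \<in> blk k j \<Longrightarrow> q \<in> blk k j \<Longrightarrow> False"
proof -
  assume a: "i < k+4" "j < k+13" "\<not> j < k+4" "p \<noteq> q" "p \<in> {i,i+1,i+3}" "q \<in> {i,i+1,i+3}"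
     "p \<in> blk k j" "q \<in> blk k j"
  have pl: "p \<le> k+6" "q \<le> k+6" using a lin_le by auto
  have pi: "p = i \<or> p = i+1 \<or> p = i+3" "q = i \<or> q = i+1 \<or> q = i+3" using a(5,6) by auto
  have "j = k+4 \<or> j = k+5 \<or> k+6 \<le> j" using a by arith
  then show False
  proof (elim disjE)
    assume "j = k+4" then have "p = k+4 \<or> p = k+5 \<or> p = 0" "q = k+4 \<or> q = k+5 \<or> q = 0" using a(7,8) by (auto simp: blk_def)
    then show False using a(1,4) pi by (elim disjE) linarith+
  next
    assume "j = k+5" then have "p = k+5 \<or> p = k+6 \<or> p = 1" "q = k+5 \<or> q = k+6 \<or> q = 1" using a(7,8) by (auto simp: blk_def)
    then show False using a(1,4) pi by (elim disjE) linarith+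
  next
    assume "k+6 \<le> j" then show False using high1[OF a(2) _ a(7,8) pl] a(4) by auto
  qed
qed

definition C :: "nat \<Rightarrow> nat set" where
  "C j = [{3,4,0},{4,5,1},{6,7,8},{6,9,10},{7,9,11},{8,10,11},{6,11,5},{7,10,0},{8,9,2}] ! j"

definition h :: "nat \<Rightarrow> nat \<Rightarrow> nat" where "h k x = (if x < 3 then x else x + k + 1)"

lemma inj_h: "inj (h k)" unfolding h_def by (rule injI) (auto split: if_splits)

lemma encB: "j < 9 \<Longrightarrow> blk k (k+4+j) = h k ` C j"
proof -
  assume "j < 9"
  then have "j = 0 \<or> j = 1 \<or> j = 2 \<or> j = 3 \<or> j = 4 \<or> j = 5 \<or> j = 6 \<or> j = 7 \<or> j = 8" by arith
  then show ?thesis by (elim disjE) (simp_all add: blk_def C_def h_def add.commute)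
qed

lemma Cchk: "list_all (\<lambda>a. list_all (\<lambda>b. a = b \<or> (\<forall>x\<in>C a. \<forall>y\<in>C a. x \<in> C b \<longrightarrow> y \<in> C b \<longrightarrow> x = y)) [0..<9]) [0..<9]"
  unfolding C_def by code_simp

lemma oth_oth: "i < k+13 \<Longrightarrow> \<not> i < k+4 \<Longrightarrow> j < k+13 \<Longrightarrow> \<not> j < k+4 \<Longrightarrow> p \<noteq> q \<Longrightarrow> p \<in> blk k i \<Longrightarrow> q \<in> blk k i
  \<Longrightarrow> p \<in> blk k j \<Longrightarrow> q \<in> blk k j \<Longrightarrow> i = j"
proof (rule ccontr)
  assume a: "i < k+13" "\<not> i < k+4" "j < k+13" "\<not> j < k+4" "p \<noteq> q" "p \<in> blk k i" "q \<in> blk k i"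
    "p \<in> blk k j" "q \<in> blk k j" "i \<noteq> j"
  define x where "x = i - (k+4)"
  define y where "y = j - (k+4)"
  have xy: "x < 9" "y < 9" "i = k+4+x" "j = k+4+y" "x \<noteq> y" using a unfolding x_def y_def by auto
  have m: "p \<in> h k ` C x" "q \<in> h k ` C x" "p \<in> h k ` C y" "q \<in> h k ` C y"
    using a encB[OF xy(1), of k] encB[OF xy(2), of k] xy by auto
  obtain p' q' where pq: "p' \<in> C x" "q' \<in> C x" "p = h k p'" "q = h k q'" using m(1,2) by auto
  have "p' \<in> C y" "q' \<in> C y" using m(3,4) pq inj_h[of k] by (auto simp: inj_def)
  moreover have "p' \<noteq> q'" using pq a(5) by auto
  moreover have "x \<in> set [0..<9]" "y \<in> set [0..<9]" using xy by auto
  then have "x = y \<or> (\<forall>x'\<in>C x. \<forall>y'\<in>C x. x' \<in> C y \<longrightarrow> y' \<in> C y \<longrightarrow> x' = y')"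
    using Cchk unfolding list_all_iff by blast
  then have "\<forall>x'\<in>C x. \<forall>y'\<in>C x. x' \<in> C y \<longrightarrow> y' \<in> C y \<longrightarrow> x' = y'" using xy(5) by blast
  ultimately show False using pq by blast
qed

lemma pairB: "i < k+13 \<Longrightarrow> j < k+13 \<Longrightarrow> p \<noteq> q \<Longrightarrow> p \<in> blk k i \<Longrightarrow> q \<in> blk k i
  \<Longrightarrow> p \<in> blk k j \<Longrightarrow> q \<in> blk k j \<Longrightarrow> i = j"
proof -
  assume a: "i < k+13" "j < k+13" "p \<noteq> q" "p \<in> blk k i" "q \<in> blk k i" "p \<in> blk k j" "q \<in> blk k j"
  show "i = j"
  proof (cases "i < k+4")
    case True
    then have bi: "blk k i = {i,i+1,i+3}" by (simp add: blk_def)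
    then have pi: "p \<in> {i,i+1,i+3}" "q \<in> {i,i+1,i+3}" using a(4,5) by simp_all
    show ?thesis
    proof (cases "j < k+4")
      case True
      then have "blk k j = {j,j+1,j+3}" by (simp add: blk_def)
      then have "p \<in> {j,j+1,j+3}" "q \<in> {j,j+1,j+3}" using a(6,7) by simp_all
      then show ?thesis using lin_lin[OF a(3) pi] by blast
    next
      case False then show ?thesis using lin_oth[OF \<open>i < k+4\<close> a(2) False a(3) pi a(6,7)] by blast
    qed
  next
    case False
    show ?thesis
    proof (cases "j < k+4")
      case True
      then have bj: "blk k j = {j,j+1,j+3}" by (simp add: blk_def)
      then have pj: "p \<in> {j,j+1,j+3}" "q \<in> {j,j+1,j+3}" using a(6,7) by simp_all
      show ?thesis using lin_oth[OF True a(1) False a(3) pj a(4,5)] by blast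
    next
      case F2: False
      show ?thesis using oth_oth[OF a(1) False a(2) F2 a(3-7)] .
    qed
  qed
qed


lemma inc_helper: "(\<And>i. i < k+13 \<Longrightarrow> p \<in> blk k i \<longleftrightarrow> i = a \<or> i = b \<or> i = c) \<Longrightarrow> a < k+13 \<Longrightarrow> b < k+13 \<Longrightarrow> c < k+13
  \<Longrightarrow> a \<noteq> b \<Longrightarrow> a \<noteq> c \<Longrightarrow> b \<noteq> c \<Longrightarrow> card {i\<in>{0..<k+13}. p \<in> blk k i} = 3"
proof -
  assume h: "\<And>i. i < k+13 \<Longrightarrow> p \<in> blk k i \<longleftrightarrow> i = a \<or> i = b \<or> i = c" "a < k+13" "b < k+13" "c < k+13"
    "a \<noteq> b" "a \<noteq> c" "b \<noteq> c"
  have "{i\<in>{0..<k+13}. p \<in> blk k i} = {a,b,c}" using h by auto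
  then show ?thesis using h by simp
qed

lemma incM: "q \<le> k \<Longrightarrow> i < k+13 \<Longrightarrow> q+3 \<in> blk k i \<longleftrightarrow> i = q \<or> i = q+2 \<or> i = q+3"
  apply (drule idx_cases)
  apply (elim disjE)
  apply (auto simp: blk_def)
  done

lemma inc0: "i < k+13 \<Longrightarrow> (0::nat) \<in> blk k i \<longleftrightarrow> i = 0 \<or> i = k+4 \<or> i = k+11"
  apply (drule idx_cases)
  apply (elim disjE)
  apply (auto simp: blk_def)
  done

lemma inc1: "i < k+13 \<Longrightarrow> (1::nat) \<in> blk k i \<longleftrightarrow> i = 0 \<or> i = 1 \<or> i = k+5"
  apply (drule idx_cases)
  apply (elim disjE)
  apply (auto simp: blk_def)
  done

lemma inc2: "i < k+13 \<Longrightarrow> (2::nat) \<in> blk k i \<longleftrightarrow> i = 1 \<or> i = 2 \<or> i = k+12"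
  apply (drule idx_cases)
  apply (elim disjE)
  apply (auto simp: blk_def)
  done

lemma inc3: "i < k+13 \<Longrightarrow> (k+4::nat) \<in> blk k i \<longleftrightarrow> i = k+1 \<or> i = k+3 \<or> i = k+4"
  apply (drule idx_cases)
  apply (elim disjE)
  apply (auto simp: blk_def)
  done

lemma inc4: "i < k+13 \<Longrightarrow> (k+5::nat) \<in> blk k i \<longleftrightarrow> i = k+2 \<or> i = k+4 \<or> i = k+5"
  apply (drule idx_cases)
  apply (elim disjE)
  apply (auto simp: blk_def)
  done

lemma inc5: "i < k+13 \<Longrightarrow> (k+6::nat) \<in> blk k i \<longleftrightarrow> i = k+3 \<or> i = k+5 \<or> i = k+10"
  apply (drule idx_cases)
  apply (elim disjE)
  apply (auto simp: blk_def)
  done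

lemma inc6: "i < k+13 \<Longrightarrow> (k+7::nat) \<in> blk k i \<longleftrightarrow> i = k+6 \<or> i = k+7 \<or> i = k+10"
  apply (drule idx_cases)
  apply (elim disjE)
  apply (auto simp: blk_def)
  done

lemma inc7: "i < k+13 \<Longrightarrow> (k+8::nat) \<in> blk k i \<longleftrightarrow> i = k+6 \<or> i = k+8 \<or> i = k+11"
  apply (drule idx_cases)
  apply (elim disjE)
  apply (auto simp: blk_def)
  done

lemma inc8: "i < k+13 \<Longrightarrow> (k+9::nat) \<in> blk k i \<longleftrightarrow> i = k+6 \<or> i = k+9 \<or> i = k+12"
  apply (drule idx_cases)
  apply (elim disjE)
  apply (auto simp: blk_def)
  done

lemma inc9: "i < k+13 \<Longrightarrow> (k+10::nat) \<in> blk k i \<longleftrightarrow> i = k+7 \<or> i = k+8 \<or> i = k+12"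
  apply (drule idx_cases)
  apply (elim disjE)
  apply (auto simp: blk_def)
  done

lemma inc10: "i < k+13 \<Longrightarrow> (k+11::nat) \<in> blk k i \<longleftrightarrow> i = k+7 \<or> i = k+9 \<or> i = k+11"
  apply (drule idx_cases)
  apply (elim disjE)
  apply (auto simp: blk_def)
  done

lemma inc11: "i < k+13 \<Longrightarrow> (k+12::nat) \<in> blk k i \<longleftrightarrow> i = k+8 \<or> i = k+9 \<or> i = k+10"
  apply (drule idx_cases)
  apply (elim disjE)
  apply (auto simp: blk_def)
  done

lemma incC: "p < k+13 \<Longrightarrow> card {i\<in>{0..<k+13}. p \<in> blk k i} = 3"
proof -
  assume p: "p < k+13"
  have "(\<exists>q. q \<le> k \<and> p = q+3) \<or> p = 0 \<or> p = 1 \<or> p = 2 \<or> p = k+4 \<or> p = k+5 \<or> p = k+6 \<or> p = k+7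
    \<or> p = k+8 \<or> p = k+9 \<or> p = k+10 \<or> p = k+11 \<or> p = k+12"
  proof (cases "3 \<le> p \<and> p \<le> k+3")
    case True
    then have "\<exists>q. q \<le> k \<and> p = q+3" by (intro exI[of _ "p-3"]) auto
    then show ?thesis by blast
  next
    case False
    then have "p = 0 \<or> p = 1 \<or> p = 2 \<or> p = k+4 \<or> p = k+5 \<or> p = k+6 \<or> p = k+7
    \<or> p = k+8 \<or> p = k+9 \<or> p = k+10 \<or> p = k+11 \<or> p = k+12" using p by arith
    then show ?thesis by blast
  qed
  then show ?thesis
  proof (elim disjE exE conjE)
    fix q assume "q \<le> k" "p = q+3"
    then show ?thesis using inc_helper[of k p q "q+2" "q+3"] incM[of q k] by auto
  next
    assume "p = 0" then show ?thesis using inc_helper[of k p "0" "k+4" "k+11"] inc0[of _ k] by auto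
  next
    assume "p = 1" then show ?thesis using inc_helper[of k p "0" "1" "k+5"] inc1[of _ k] by auto
  next
    assume "p = 2" then show ?thesis using inc_helper[of k p "1" "2" "k+12"] inc2[of _ k] by auto
  next
    assume "p = k+4" then show ?thesis using inc_helper[of k p "k+1" "k+3" "k+4"] inc3[of _ k] by auto
  next
    assume "p = k+5" then show ?thesis using inc_helper[of k p "k+2" "k+4" "k+5"] inc4[of _ k] by auto
  next
    assume "p = k+6" then show ?thesis using inc_helper[of k p "k+3" "k+5" "k+10"] inc5[of _ k] by auto
  next
    assume "p = k+7" then show ?thesis using inc_helper[of k p "k+6" "k+7" "k+10"] inc6[of _ k] by auto
  next
    assume "p = k+8" then show ?thesis using inc_helper[of k p "k+6" "k+8" "k+11"] inc7[of _ k] by auto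
  next
    assume "p = k+9" then show ?thesis using inc_helper[of k p "k+6" "k+9" "k+12"] inc8[of _ k] by auto
  next
    assume "p = k+10" then show ?thesis using inc_helper[of k p "k+7" "k+8" "k+12"] inc9[of _ k] by auto
  next
    assume "p = k+11" then show ?thesis using inc_helper[of k p "k+7" "k+9" "k+11"] inc10[of _ k] by auto
  next
    assume "p = k+12" then show ?thesis using inc_helper[of k p "k+8" "k+9" "k+10"] inc11[of _ k] by auto
  qed
qed


definition col :: "nat \<Rightarrow> nat \<Rightarrow> nat" where
 "col k t = (if t < k+4 then t mod 4 else if t = k+4 then 4 else if t = k+5 then 5
   else if t = k+6 then (if k mod 4 = 0 then 2 else 3) else if t = k+7 then 0 else if t = k+8 then 2
   else if t = k+9 then 3 else if t = k+10 then 4 else if t = k+11 then 5 else 1)"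

lemma m4: "((i::nat) + d) mod 4 = (i mod 4 + d) mod 4" by (simp add: mod_add_left_eq)

lemma mod4_distinct: "(i::nat) mod 4 \<noteq> (i+1) mod 4 \<and> i mod 4 \<noteq> (i+3) mod 4 \<and> (i+1) mod 4 \<noteq> (i+3) mod 4"
proof -
  have "i mod 4 = 0 \<or> i mod 4 = 1 \<or> i mod 4 = 2 \<or> i mod 4 = 3" by arith
  then show ?thesis by (subst (1 2 3) m4, subst m4) auto
qed

lemma m4ne: "(x::nat) mod 4 \<noteq> 4" "(x::nat) mod 4 \<noteq> 5"
  using mod_less_divisor[of 4 x] by auto

lemma lin_col: "i < k+4 \<Longrightarrow> col k i \<noteq> col k (i+1) \<and> col k i \<noteq> col k (i+3) \<and> col k (i+1) \<noteq> col k (i+3)"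
proof -
  assume a: "i < k+4"
  have km: "k mod 4 = 0 \<or> k mod 4 = 1 \<or> k mod 4 = 2 \<or> k mod 4 = 3" by arith
  have "i + 3 < k+4 \<or> i = k+1 \<or> i = k+2 \<or> i = k+3" using a by arith
  then show ?thesis
  proof (elim disjE)
    assume "i+3 < k+4" then show ?thesis using mod4_distinct[of i] by (simp add: col_def)
  next
    assume h: "i = k+1" show ?thesis using mod4_distinct[of i] h by (simp add: col_def m4ne)
  next
    assume h: "i = k+2" show ?thesis using mod4_distinct[of i] h by (simp add: col_def m4ne)
  next
    assume "i = k+3" then show ?thesis using km by (simp add: col_def m4[of k 3]) auto
  qed
qed

lemma strong: "i < k+13 \<Longrightarrow> inj_on (col k) (blk k i)"
  apply (drule idx_cases)
  apply (elim disjE)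
  using lin_col[of i k] apply (simp add: blk_def)
  apply (simp_all add: blk_def col_def)
  done

lemma col_range: "col k t < 6" unfolding col_def by auto

lemma b3: "i < k+13 \<Longrightarrow> blk k i \<subseteq> {0..<k+13} \<and> card (blk k i) = 3"
  apply (drule idx_cases)
  apply (elim disjE)
  apply (simp_all add: blk_def)
  done

lemma conn: assumes cl: "\<forall>i\<in>{0..<k+13}. blk k i \<inter> S \<noteq> {} \<longrightarrow> blk k i \<subseteq> S" and z: "0 \<in> S"
  shows "{0..<k+13} \<subseteq> S"
proof -
  have step: "x \<in> S \<Longrightarrow> x \<in> blk k i \<Longrightarrow> i < k+13 \<Longrightarrow> blk k i \<subseteq> S" for x i using cl by auto
  have ch: "t \<le> k+4 \<Longrightarrow> t \<in> S" for t
  proof (induction t)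
    case 0 then show ?case using z by simp
  next
    case (Suc t)
    then have "t \<in> S" "t < k+4" by auto
    moreover have "t \<in> blk k t" "Suc t \<in> blk k t" using \<open>t < k+4\<close> by (auto simp: blk_def)
    ultimately show ?case using step[of t t] by auto
  qed
  have a: "k+4 \<in> S" "1 \<in> S" "2 \<in> S" using ch by auto
  have "k+5 \<in> S" using step[OF a(1), of "k+4"] by (auto simp: blk_def)
  moreover have "k+6 \<in> S" using step[OF a(2), of "k+5"] by (auto simp: blk_def)
  moreover have "{k+7, k+12} \<subseteq> S" using step[OF \<open>k+6 \<in> S\<close>, of "k+10"] by (auto simp: blk_def)
  moreover have "{k+8, k+11} \<subseteq> S" using step[OF z, of "k+11"] by (auto simp: blk_def)
  moreover have "{k+9, k+10} \<subseteq> S" using step[OF a(3), of "k+12"] by (auto simp: blk_def)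
  ultimately show ?thesis
  proof (intro subsetI)
    fix x assume h: "k+5 \<in> S" "k+6 \<in> S" "{k+7, k+12} \<subseteq> S" "{k+8, k+11} \<subseteq> S" "{k+9, k+10} \<subseteq> S"
      "x \<in> {0..<k+13}"
    then have "x \<le> k+4 \<or> x = k+5 \<or> x = k+6 \<or> x = k+7 \<or> x = k+8 \<or> x = k+9 \<or> x = k+10 \<or> x = k+11 \<or> x = k+12"
      by auto
    then show "x \<in> S" using h ch by auto
  qed
qed


definition b11 :: "nat \<Rightarrow> nat set" where "b11 i = [{0,1,3}, {1,2,4}, {2,3,5}, {3,4,6}, {4,5,7}, {5,6,8}, {6,7,9}, {7,8,10}, {0,8,9}, {1,9,10}, {0,2,10}] ! i"
definition nc11 :: "nat \<Rightarrow> nat list" where "nc11 p = [[4,5,6,7], [5,6,7,8], [6,7,8,9], [7,8,9,10], [8,9,10,0], [9,10,0,1], [10,0,1,2], [0,1,2,3], [1,2,3,4], [2,3,4,5], [3,4,5,6]] ! p"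
definition c11 :: "nat \<Rightarrow> nat" where "c11 p = [0,1,2,3,0,1,4,2,3,5,4] ! p"

lemma i11: "list_all (\<lambda>p. length (filter (\<lambda>i. p \<in> b11 i) [0..<11]) = 3) [0..<11]"
  unfolding b11_def by code_simp

lemma b11_3: "list_all (\<lambda>i. b11 i \<subseteq> {0..<11} \<and> card (b11 i) = 3) [0..<11]"
  unfolding b11_def by code_simp

lemma pr11: "list_all (\<lambda>i. list_all (\<lambda>j. i = j \<or> (\<forall>x\<in>b11 i. \<forall>y\<in>b11 i. x \<in> b11 j \<longrightarrow> y \<in> b11 j \<longrightarrow> x = y)) [0..<11]) [0..<11]"
  unfolding b11_def by code_simp

lemma t11a: "list_all (\<lambda>p. list_all (\<lambda>q. p = q \<or> q \<in> set (nc11 p) \<or> list_ex (\<lambda>i. p \<in> b11 i \<and> q \<in> b11 i) [0..<11]) [0..<11]) [0..<11]"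
  unfolding b11_def nc11_def by code_simp

lemma t11b: "list_all (\<lambda>p. list_all (\<lambda>q. list_all (\<lambda>r. q = r \<or> list_ex (\<lambda>i. q \<in> b11 i \<and> r \<in> b11 i) [0..<11]) (nc11 p)) (nc11 p)) [0..<11]"
  unfolding b11_def nc11_def by code_simp

lemma s11: "list_all (\<lambda>i. inj_on c11 (b11 i)) [0..<11]"
  unfolding b11_def c11_def by code_simp

lemma r11: "list_all (\<lambda>p. c11 p < 6) [0..<11]"
  unfolding c11_def by code_simp

lemma ch11: "list_all (\<lambda>t. t \<in> b11 t \<and> Suc t \<in> b11 t) [0..<10]"
  unfolding b11_def by code_simp

lemma filt_card: "card {i\<in>{0..<n}. P i} = length (filter P [0..<n])"
proof -
  have e: "{i\<in>{0..<n}. P i} = set (filter P [0..<n])" by auto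
  show ?thesis unfolding e by (rule distinct_card) simp
qed

lemma lb11: assumes "strong_colouring (b11 ` {0..<11}) c" shows "6 \<le> card (c ` {0..<11})"
proof -
  have coll: "c p \<noteq> c q" if "p \<noteq> q" "i < 11" "p \<in> b11 i" "q \<in> b11 i" for p q i
    using assms that unfolding strong_colouring_def inj_on_def by auto
  have "card {0..<11::nat} \<le> 2 * card (c ` {0..<11})"
  proof (rule fibre_bound)
    fix p q r assume h: "p \<in> {0..<11::nat}" "q \<in> {0..<11::nat}" "r \<in> {0..<11::nat}" "p \<noteq> q" "p \<noteq> r" "q \<noteq> r"
    show "c p \<noteq> c q \<or> c p \<noteq> c r \<or> c q \<noteq> c r"
    proof (rule ccontr)
      assume "\<not> ?thesis"
      then have eq: "c p = c q" "c p = c r" "c q = c r" by auto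
      have A: "\<forall>p\<in>set [0..<11]. \<forall>q\<in>set [0..<11]. p = q \<or> q \<in> set (nc11 p) \<or> (\<exists>i\<in>set [0..<11]. p \<in> b11 i \<and> q \<in> b11 i)"
        using t11a unfolding list_all_iff list_ex_iff .
      have hs: "p \<in> set [0..<11]" "q \<in> set [0..<11]" "r \<in> set [0..<11]" using h by auto
      have n1: "\<not> (\<exists>i\<in>set [0..<11]. p \<in> b11 i \<and> q \<in> b11 i)" using coll[OF h(4)] eq(1) by auto
      have n2: "\<not> (\<exists>i\<in>set [0..<11]. p \<in> b11 i \<and> r \<in> b11 i)" using coll[OF h(5)] eq(2) by auto
      have n3: "\<not> (\<exists>i\<in>set [0..<11]. q \<in> b11 i \<and> r \<in> b11 i)" using coll[OF h(6)] eq(3) by auto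
      have q1: "q \<in> set (nc11 p)" using bspec[OF bspec[OF A hs(1)] hs(2)] h(4) n1 by blast
      have r1: "r \<in> set (nc11 p)" using bspec[OF bspec[OF A hs(1)] hs(3)] h(5) n2 by blast
      have Bf: "\<forall>p\<in>set [0..<11]. \<forall>q\<in>set (nc11 p). \<forall>r\<in>set (nc11 p). q = r \<or> (\<exists>i\<in>set [0..<11]. q \<in> b11 i \<and> r \<in> b11 i)"
        using t11b unfolding list_all_iff list_ex_iff .
      show False using bspec[OF bspec[OF bspec[OF Bf hs(1)] q1] r1] h(6) n3 by blast
    qed
  qed simp
  then show ?thesis by simp
qed

lemma conf11: "sym_config {0..<11::nat} (b11 ` {0..<11}) \<and> connected_config {0..<11::nat} (b11 ` {0..<11})
   \<and> strong_chromatic_number {0..<11::nat} (b11 ` {0..<11}) = 6"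
proof (intro conjI)
  have L: "set [0..<11] = {0..<11::nat}" by simp
  have B3: "b11 i \<subseteq> {0..<11} \<and> card (b11 i) = 3" if "i \<in> {0..<11}" for i
    using bspec[OF b11_3[unfolded list_all_iff] that[folded L]] .
  show "sym_config {0..<11::nat} (b11 ` {0..<11})"
  proof (rule sym_from_blk)
    show "\<And>i. i \<in> {0..<11} \<Longrightarrow> b11 i \<subseteq> {0..<11} \<and> card (b11 i) = 3" by (rule B3)
    fix i j p q assume h: "i \<in> {0..<11::nat}" "j \<in> {0..<11::nat}" "p \<noteq> q" "p \<in> b11 i" "q \<in> b11 i" "p \<in> b11 j" "q \<in> b11 j"
    have "i = j \<or> (\<forall>x\<in>b11 i. \<forall>y\<in>b11 i. x \<in> b11 j \<longrightarrow> y \<in> b11 j \<longrightarrow> x = y)"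
      using bspec[OF bspec[OF pr11[unfolded list_all_iff] h(1)[folded L]] h(2)[folded L]] .
    then show "i = j" using h(3-7) by blast
  next
    fix p assume "p \<in> {0..<11::nat}"
    then have "length (filter (\<lambda>i. p \<in> b11 i) [0..<11]) = 3"
      using bspec[OF i11[unfolded list_all_iff], of p] L by blast
    then show "card {i \<in> {0..<11}. p \<in> b11 i} = 3" by (simp only: filt_card)
  qed simp_all
  show "connected_config {0..<11::nat} (b11 ` {0..<11})"
  proof (rule conn_from[where r = 0])
    show "\<And>i. i \<in> {0..<11} \<Longrightarrow> b11 i \<subseteq> {0..<11}" using B3 by blast
    fix S assume cl: "\<forall>i\<in>{0..<11}. b11 i \<inter> S \<noteq> {} \<longrightarrow> b11 i \<subseteq> S" and z: "(0::nat) \<in> S"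
    have ind: "t \<le> 10 \<Longrightarrow> t \<in> S" for t
    proof (induction t)
      case 0 then show ?case using z by simp
    next
      case (Suc t)
      then have tS: "t \<in> S" and t10: "t < 10" by auto
      have tt: "t \<in> set [0..<10]" using t10 by simp
      have m: "t \<in> b11 t" "Suc t \<in> b11 t" using bspec[OF ch11[unfolded list_all_iff] tt] by auto
      have t11: "t \<in> {0..<11}" using t10 by simp
      have "b11 t \<inter> S \<noteq> {}" using m(1) tS by blast
      then have "b11 t \<subseteq> S" using bspec[OF cl t11] by blast
      then show ?case using m(2) by blast
    qed
    show "{0..<11} \<subseteq> S"
    proof
      fix x assume "x \<in> {0..<11::nat}"
      then have "x \<le> 10" by simp
      then show "x \<in> S" by (rule ind)
    qed
  qed simp
  show "strong_chromatic_number {0..<11::nat} (b11 ` {0..<11}) = 6"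
  proof (rule chrom6)
    show sc: "strong_colouring (b11 ` {0..<11}) c11"
      unfolding strong_colouring_def
    proof
      fix b assume "b \<in> b11 ` {0..<11}"
      then obtain i where "i \<in> {0..<11}" "b = b11 i" by blast
      then show "inj_on c11 b" using bspec[OF s11[unfolded list_all_iff], of i] L by blast
    qed
    have "c11 ` {0..<11} \<subseteq> {0..<6}"
    proof
      fix y assume "y \<in> c11 ` {0..<11}"
      then obtain p where "p \<in> {0..<11}" "y = c11 p" by blast
      then show "y \<in> {0..<6}" using bspec[OF r11[unfolded list_all_iff], of p] L by auto
    qed
    then have "card (c11 ` {0..<11}) \<le> card {0..<6::nat}" by (intro card_mono) auto
    then show "card (c11 ` {0..<11}) = 6" using lb11[OF sc] by simp
  qed (rule lb11)
qed

lemma Kchk: "list_all (\<lambda>a. list_all (\<lambda>b. a = b \<or> list_ex (\<lambda>j. 6+a \<in> C j \<and> 6+b \<in> C j) [0..<9]) [0..<6]) [0..<6]"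
  unfolding C_def by code_simp

lemma clique_pair: "p \<in> {k+7..<k+13} \<Longrightarrow> q \<in> {k+7..<k+13} \<Longrightarrow> p \<noteq> q \<Longrightarrow> \<exists>b\<in>blk k ` {0..<k+13}. p \<in> b \<and> q \<in> b"
proof -
  assume hp: "p \<in> {k+7..<k+13}" and hq: "q \<in> {k+7..<k+13}" and pq: "p \<noteq> q"
  define a where "a = p - (k+7)"
  define b where "b = q - (k+7)"
  have a6: "a \<in> set [0..<6]" "b \<in> set [0..<6]" using hp hq unfolding a_def b_def by auto
  have ab: "a \<noteq> b" using hp hq pq unfolding a_def b_def by auto
  have hpa: "p = h k (6+a)" using hp unfolding a_def h_def by auto
  have hqb: "q = h k (6+b)" using hq unfolding b_def h_def by auto
  have "a = b \<or> (\<exists>j\<in>set [0..<9]. 6+a \<in> C j \<and> 6+b \<in> C j)"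
    using bspec[OF bspec[OF Kchk[unfolded list_all_iff list_ex_iff] a6(1)] a6(2)] .
  then obtain j where j: "j \<in> set [0..<9]" "6+a \<in> C j" "6+b \<in> C j" using ab by blast
  have j9: "j < 9" using j(1) by simp
  have "p \<in> h k ` C j" "q \<in> h k ` C j" using j(2,3) hpa hqb by blast+
  then have "p \<in> blk k (k+4+j)" "q \<in> blk k (k+4+j)" unfolding encB[OF j9] .
  moreover have "k+4+j \<in> {0..<k+13}" using j9 by simp
  ultimately show ?thesis by blast
qed

lemma gen: "sym_config {0..<k+13} (blk k ` {0..<k+13}) \<and> connected_config {0..<k+13} (blk k ` {0..<k+13})
   \<and> strong_chromatic_number {0..<k+13} (blk k ` {0..<k+13}) = 6"
proof (intro conjI)
  have B3: "blk k i \<subseteq> {0..<k+13} \<and> card (blk k i) = 3" if "i \<in> {0..<k+13}" for i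
    using b3[of i k] that by simp
  show "sym_config {0..<k+13} (blk k ` {0..<k+13})"
  proof (rule sym_from_blk)
    show "\<And>i. i \<in> {0..<k+13} \<Longrightarrow> blk k i \<subseteq> {0..<k+13} \<and> card (blk k i) = 3" by (rule B3)
    fix i j p q assume h: "i \<in> {0..<k+13}" "j \<in> {0..<k+13}" "p \<noteq> q" "p \<in> blk k i" "q \<in> blk k i" "p \<in> blk k j" "q \<in> blk k j"
    have "i < k+13" "j < k+13" using h(1,2) by simp_all
    then show "i = j" using pairB h(3-7) by blast
  next
    fix p assume "p \<in> {0..<k+13}"
    then have "p < k+13" by simp
    then show "card {i \<in> {0..<k+13}. p \<in> blk k i} = 3" by (rule incC)
  qed simp_all
  show "connected_config {0..<k+13} (blk k ` {0..<k+13})"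
  proof (rule conn_from[where r = 0])
    show "\<And>i. i \<in> {0..<k+13} \<Longrightarrow> blk k i \<subseteq> {0..<k+13}" using B3 by blast
    show "\<And>S. \<forall>i\<in>{0..<k + 13}. blk k i \<inter> S \<noteq> {} \<longrightarrow> blk k i \<subseteq> S \<Longrightarrow> 0 \<in> S \<Longrightarrow> {0..<k + 13} \<subseteq> S"
      by (rule conn)
  qed simp
  show "strong_chromatic_number {0..<k+13} (blk k ` {0..<k+13}) = 6"
  proof (rule chrom6)
    have lb: "6 \<le> card (c ` {0..<k+13})" if "strong_colouring (blk k ` {0..<k+13}) c" for c
    proof (rule clique_lb[where K = "{k+7..<k+13}"])
      show "{k+7..<k+13} \<subseteq> {0..<k+13}" by auto
      show "\<And>p q. p \<in> {k+7..<k+13} \<Longrightarrow> q \<in> {k+7..<k+13} \<Longrightarrow> p \<noteq> q \<Longrightarrow> \<exists>b\<in>blk k ` {0..<k+13}. p \<in> b \<and> q \<in> b"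
        by (rule clique_pair)
    qed (simp_all add: that)
    show sc: "strong_colouring (blk k ` {0..<k+13}) (col k)"
      unfolding strong_colouring_def
    proof
      fix b assume "b \<in> blk k ` {0..<k+13}"
      then obtain i where "i \<in> {0..<k+13}" "b = blk k i" by blast
      then show "inj_on (col k) b" using strong[of i k] by simp
    qed
    have "col k ` {0..<k+13} \<subseteq> {0..<6}"
    proof
      fix y assume "y \<in> col k ` {0..<k+13}"
      then obtain p where "y = col k p" by blast
      then show "y \<in> {0..<6}" using col_range[of k p] by simp
    qed
    then have "card (col k ` {0..<k+13}) \<le> card {0..<6::nat}" by (intro card_mono) auto
    then show "card (col k ` {0..<k+13}) = 6" using lb[OF sc] by simp
    show "\<And>c. strong_colouring (blk k ` {0..<k+13}) c \<Longrightarrow> 6 \<le> card (c ` {0..<k+13})" by (rule lb)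
  qed
qed

theorem mainTheorem18:
  fixes v :: nat
  assumes "v = 11 \<or> v \<ge> 13"
  shows "\<exists>(P :: nat set) B. sym_config P B \<and> card P = v \<and> connected_config P B \<and>
           strong_chromatic_number P B = 6"
proof (cases "v = 11")
  case True
  have "card {0..<11::nat} = v" using True by simp
  then show ?thesis using conf11 by blast
next
  case False
  then have "13 \<le> v" using assms by simp
  then obtain k where k: "v = k + 13" by (metis add.commute le_Suc_ex)
  have "card {0..<k+13} = v" using k by simp
  then show ?thesis using gen[of k] by blast
qed

end
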